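(* In $SO(6)$, writing diagonal matrices as vectors of their diagonal entries, let $\Gamma_1=\{(1,1,1,1,1,1),(-1,-1,-1,-1,-1,-1),(-1,-1,1,1,1,1),(-1,1,-1,1,1,1),(1,-1,-1,1,1,1),(-1,1,1,-1,-1,-1),(1,-1,1,-1,-1,-1),(1,1,-1,-1,-1,-1)\}$ and $\Gamma_2=\{(1,1,1,1,1,1),(-1,-1,-1,-1,-1,-1),(-1,-1,1,1,1,1),(1,1,-1,-1,1,1),(1,1,1,1,-1,-1),(-1,-1,-1,-1,1,1),(-1,-1,1,1,-1,-1),(1,1,-1,-1,-1,-1)\}$. Then $\Gamma_1$ and $\Gamma_2$ are subgroups of $SO(6)$ which are almost conjugate in $SO(6)$ but not conjugate in $SO(6)$.
   Context: Two finite subgroups $\Gamma_1,\Gamma_2$ of a group $G$ are almost conjugate in $G$ if $\#([b]_G\cap\Gamma_1)=\#([b]_G\cap\Gamma_2)$ for every conjugacy class $[b]_G$ of $G$. *)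

theory Defs
  imports "HOL-Analysis.Analysis" "HOL-Algebra.Group"
begin

definition SO6 :: "(real^6^6) monoid" where
  "SO6 = \<lparr>carrier = {A. rotation_matrix A}, mult = (**), one = mat 1\<rparr>"

definition diag6 :: "real^6 \<Rightarrow> real^6^6" where
  "diag6 d = (\<chi> i j. if i = j then d $ i else 0)"

definition dmat :: "real list \<Rightarrow> real^6^6" where
  "dmat xs = diag6 (vector xs)"

definition conj_class :: "('a, 'b) monoid_scheme \<Rightarrow> 'a \<Rightarrow> 'a set" where
  "conj_class G b = {g \<otimes>\<^bsub>G\<^esub> b \<otimes>\<^bsub>G\<^esub> inv\<^bsub>G\<^esub> g | g. g \<in> carrier G}"

definition almost_conjugate :: "('a, 'b) monoid_scheme \<Rightarrow> 'a set \<Rightarrow> 'a set \<Rightarrow> bool" where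
  "almost_conjugate G H1 H2 \<longleftrightarrow>
     (\<forall>b \<in> carrier G. card (conj_class G b \<inter> H1) = card (conj_class G b \<inter> H2))"

definition conjugate_subgroups :: "('a, 'b) monoid_scheme \<Rightarrow> 'a set \<Rightarrow> 'a set \<Rightarrow> bool" where
  "conjugate_subgroups G H1 H2 \<longleftrightarrow>
     (\<exists>g \<in> carrier G. (\<lambda>h. g \<otimes>\<^bsub>G\<^esub> h \<otimes>\<^bsub>G\<^esub> inv\<^bsub>G\<^esub> g) ` H1 = H2)"

definition Gamma1 :: "(real^6^6) set" where
  "Gamma1 = dmat ` {[1,1,1,1,1,1], [-1,-1,-1,-1,-1,-1], [-1,-1,1,1,1,1], [-1,1,-1,1,1,1],
                    [1,-1,-1,1,1,1], [-1,1,1,-1,-1,-1], [1,-1,1,-1,-1,-1], [1,1,-1,-1,-1,-1]}"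

definition Gamma2 :: "(real^6^6) set" where
  "Gamma2 = dmat ` {[1,1,1,1,1,1], [-1,-1,-1,-1,-1,-1], [-1,-1,1,1,1,1], [1,1,-1,-1,1,1],
                    [1,1,1,1,-1,-1], [-1,-1,-1,-1,1,1], [-1,-1,1,1,-1,-1], [1,1,-1,-1,-1,-1]}"

end

theory Submission
  imports Defs "HOL-Combinatorics.Permutations"
begin


lemma exhaust_6:
  fixes x :: 6
  shows "x = 1 \<or> x = 2 \<or> x = 3 \<or> x = 4 \<or> x = 5 \<or> x = 6"
proof (induct x)
  case (of_int z)
  then have "z = 0 \<or> z = 1 \<or> z = 2 \<or> z = 3 \<or> z = 4 \<or> z = 5" by fastforce
  then show ?case by auto
qed
lemma forall_6: "(\<forall>i::6. P i) \<longleftrightarrow> P 1 \<and> P 2 \<and> P 3 \<and> P 4 \<and> P 5 \<and> P 6"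
  by (metis exhaust_6)

lemma vector_6 [simp]:
 "(vector [a,b,c,d,e,f] ::('a::zero)^6)$1 = a"
 "(vector [a,b,c,d,e,f] ::('a::zero)^6)$2 = b"
 "(vector [a,b,c,d,e,f] ::('a::zero)^6)$3 = c"
 "(vector [a,b,c,d,e,f] ::('a::zero)^6)$4 = d"
 "(vector [a,b,c,d,e,f] ::('a::zero)^6)$5 = e"
 "(vector [a,b,c,d,e,f] ::('a::zero)^6)$6 = f"
  unfolding vector_def by simp_all
lemma diag6_nth [simp]: "diag6 d $ i $ j = (if i = j then d $ i else 0)"
  by (simp add: diag6_def)

lemma diag6_mult_aux: "(if i = k then a else 0) * (if k = j then b else (0::real)) = (if k = i then (if i = j then a * b else 0) else 0)"
  by auto

lemma diag6_mult: "diag6 d ** diag6 e = diag6 (\<chi> i. d $ i * e $ i)"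
  by (simp add: vec_eq_iff matrix_matrix_mult_def diag6_mult_aux)
lemma diag6_eq: "diag6 d = diag6 e \<longleftrightarrow> d = e"
  by (auto simp: vec_eq_iff)

lemma transpose_diag6 [simp]: "transpose (diag6 d) = diag6 d"
  by (simp add: vec_eq_iff transpose_def)

lemma vector6_eq: "(vector [a,b,c,d,e,f] :: real^6) = vector [a',b',c',d',e',f'] \<longleftrightarrow>
   a = a' \<and> b = b' \<and> c = c' \<and> d = d' \<and> e = e' \<and> f = f'"
  apply (subst vec_eq_iff) apply (subst forall_6) by simp
lemma dmat6_eq: "dmat [a,b,c,d,e,f] = dmat [a',b',c',d',e',f'] \<longleftrightarrow>
   a = a' \<and> b = b' \<and> c = c' \<and> d = d' \<and> e = e' \<and> f = f'"
  unfolding dmat_def diag6_eq by (rule vector6_eq)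
lemma dmat_mult: "dmat [a,b,c,d,e,f] ** dmat [a',b',c',d',e',f'] = dmat [a*a',b*b',c*c',d*d',e*e',f*f']"
  unfolding dmat_def diag6_mult diag6_eq apply (subst vec_eq_iff) apply (subst forall_6) by simp

lemma UNIV_6: "UNIV = {1, 2, 3, 4, 5, 6::6}"
  apply (rule UNIV_eq_I) subgoal for x using exhaust_6[of x] by (simp only: insert_iff empty_iff simp_thms) done

lemma prod_UNIV6: "prod f (UNIV::6 set) = f 1 * f 2 * f 3 * f 4 * f 5 * f 6"
  unfolding UNIV_6 by (simp add: mult.assoc)

lemma sum_UNIV6: "sum f (UNIV::6 set) = f 1 + f 2 + f 3 + f 4 + f 5 + f 6"
  unfolding UNIV_6 by (simp add: add.assoc)

lemma det_dmat: "det (dmat [a,b,c,d,e,f]) = a*b*c*d*e*f"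
  unfolding dmat_def by (subst det_diagonal) (auto simp: prod_UNIV6)

lemma trace_dmat: "trace (dmat [a,b,c,d,e,f]) = a+b+c+d+e+f"
  unfolding dmat_def trace_def by (simp add: sum_UNIV6)

lemma dmat_add: "dmat [a,b,c,d,e,f] + dmat [a',b',c',d',e',f'] = dmat [a+a',b+b',c+c',d+d',e+e',f+f']"
  unfolding dmat_def diag6_def apply (subst vec_eq_iff) apply (subst forall_6)
  by (simp add: vec_eq_iff)

lemma mat1_dmat: "(mat 1 :: real^6^6) = dmat [1,1,1,1,1,1]"
proof -
  have "\<forall>i. (vector [1,1,1,1,1,1] :: real^6) $ i = 1"
    apply (subst forall_6) by simp
  then show ?thesis unfolding dmat_def diag6_def by (simp add: mat_def vec_eq_iff)
qed

lemma rot_dmat: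
  assumes "a\<in>{-1,1}" "b\<in>{-1,1}" "c\<in>{-1,1}" "d\<in>{-1,1}" "e\<in>{-1,1}" "f\<in>{-1,1}"
    "a*b*c*d*e*f = 1"
  shows "rotation_matrix (dmat [a,b,c,d,e,f])"
proof -
  have "transpose (dmat [a,b,c,d,e,f]) ** dmat [a,b,c,d,e,f] = mat 1"
    unfolding mat1_dmat using assms by (simp add: dmat_def dmat_mult[unfolded dmat_def]) (auto simp: dmat6_eq[unfolded dmat_def])
  then show ?thesis unfolding rotation_matrix_def orthogonal_matrix using assms det_dmat by simp
qed




lemma SO6_simps [simp]: "carrier SO6 = {A. rotation_matrix A}" "mult SO6 = (**)" "one SO6 = mat 1"
  by (simp_all add: SO6_def)

lemma SO6_group: "group SO6"
proof (rule groupI)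
  fix x y assume "x \<in> carrier SO6" "y \<in> carrier SO6"
  then show "x \<otimes>\<^bsub>SO6\<^esub> y \<in> carrier SO6"
    by (simp add: rotation_matrix_def orthogonal_matrix_mul det_mul)
next
  show "\<one>\<^bsub>SO6\<^esub> \<in> carrier SO6" by (simp add: rotation_matrix_def orthogonal_matrix_id)
next
  fix x y z assume "x \<in> carrier SO6" "y \<in> carrier SO6" "z \<in> carrier SO6"
  then show "x \<otimes>\<^bsub>SO6\<^esub> y \<otimes>\<^bsub>SO6\<^esub> z = x \<otimes>\<^bsub>SO6\<^esub> (y \<otimes>\<^bsub>SO6\<^esub> z)"
    by (simp add: matrix_mul_assoc)
next
  fix x assume "x \<in> carrier SO6"
  then show "\<one>\<^bsub>SO6\<^esub> \<otimes>\<^bsub>SO6\<^esub> x = x" by simp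
next
  fix x assume "x \<in> carrier SO6"
  then show "\<exists>y\<in>carrier SO6. y \<otimes>\<^bsub>SO6\<^esub> x = \<one>\<^bsub>SO6\<^esub>"
    by (intro bexI[of _ "transpose x"]) (auto simp: rotation_matrix_def orthogonal_matrix_def)
qed

lemma SO6_inv: "x \<in> carrier SO6 \<Longrightarrow> inv\<^bsub>SO6\<^esub> x = transpose x"
  by (rule group.inv_equality[OF SO6_group]) (auto simp: rotation_matrix_def orthogonal_matrix_def)

lemma (in group) conj_class_shift:
  assumes "x \<in> carrier G" "g \<in> carrier G" "b \<in> carrier G"
  shows "g \<otimes> x \<otimes> inv g \<in> conj_class G b \<longleftrightarrow> x \<in> conj_class G b"
proof
  assume "g \<otimes> x \<otimes> inv g \<in> conj_class G b"
  then obtain h where h: "h \<in> carrier G" "g \<otimes> x \<otimes> inv g = h \<otimes> b \<otimes> inv h"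
    unfolding conj_class_def by auto
  have "x = inv g \<otimes> (g \<otimes> x \<otimes> inv g) \<otimes> g"
    using assms by (simp add: m_assoc) (simp add: m_assoc[symmetric])
  also have "\<dots> = (inv g \<otimes> h) \<otimes> b \<otimes> inv (inv g \<otimes> h)"
    using assms h by (simp add: m_assoc inv_mult_group)
  finally show "x \<in> conj_class G b" unfolding conj_class_def using assms h by auto
next
  assume "x \<in> conj_class G b"
  then obtain h where h: "h \<in> carrier G" "x = h \<otimes> b \<otimes> inv h"
    unfolding conj_class_def by auto
  have "g \<otimes> x \<otimes> inv g = (g \<otimes> h) \<otimes> b \<otimes> inv (g \<otimes> h)"
    using assms h by (simp add: m_assoc inv_mult_group)
  then show "g \<otimes> x \<otimes> inv g \<in> conj_class G b" unfolding conj_class_def using assms h by auto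
qed


lemma ifmult1: "(if a = k then x else 0) * (if k = b then y else (0::real)) = (if k = a then (if a = b then x * y else 0) else 0)"
  by auto
lemma ifmult2: "(if a = k then x else 0) * (if b = k then y else (0::real)) = (if k = a then (if a = b then x * y else 0) else 0)"
  by auto
lemma ifmult3: "(if k = a then x else 0) * (if k = b then y else (0::real)) = (if k = a then (if a = b then x * y else 0) else 0)"
  by auto

definition pmat :: "(6 \<Rightarrow> 6) \<Rightarrow> real^6^6" where
  "pmat p = (\<chi> i j. if p i = j then 1 else 0)"

lemma pmat_rows: "pmat p = (\<chi> i. (mat 1 :: real^6^6) $ p i)"
  by (simp add: pmat_def mat_def vec_eq_iff)

lemma det_pmat: "p permutes UNIV \<Longrightarrow> det (pmat p) = of_int (sign p)"
  unfolding pmat_rows by (simp add: det_permute_rows det_I)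

lemma pmat_orth: assumes "p permutes UNIV" shows "transpose (pmat p) ** pmat p = mat 1"
proof -
  have "(\<Sum>k\<in>UNIV. (if p k = i then 1 else 0) * (if p k = j then 1 else (0::real))) = (if i = j then 1 else 0)" for i j
  proof -
    have "(\<Sum>k\<in>UNIV. (if p k = i then 1 else 0) * (if p k = j then 1 else (0::real)))
        = (\<Sum>k\<in>UNIV. (if k = i then 1 else 0) * (if k = j then 1 else (0::real)))"
      using sum.permute[OF assms, of "\<lambda>k. (if k = i then 1 else 0) * (if k = j then 1 else (0::real))"]
      by (simp add: o_def)
    also have "\<dots> = (if i = j then 1 else 0)"
      by (simp add: ifmult3)
    finally show ?thesis .
  qed
  then show ?thesis
    by (simp add: pmat_def transpose_def matrix_matrix_mult_def mat_def vec_eq_iff)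
qed

lemma pmat_conj: assumes "p permutes UNIV"
  shows "pmat p ** diag6 d ** transpose (pmat p) = diag6 (\<chi> i. d $ p i)"
proof -
  have inj: "p i = p j \<longleftrightarrow> i = j" for i j using permutes_inj[OF assms] by (auto dest: injD)
  have 1: "pmat p ** diag6 d = (\<chi> i j. if p i = j then d $ j else 0)"
    by (simp add: pmat_def matrix_matrix_mult_def vec_eq_iff ifmult1)
  show ?thesis unfolding 1
    by (simp add: pmat_def transpose_def matrix_matrix_mult_def vec_eq_iff inj ifmult2)
qed




definition p1 :: "6 \<Rightarrow> 6" where "p1 = Transposition.transpose 1 4 \<circ> Transposition.transpose 2 5"
definition p2 :: "6 \<Rightarrow> 6" where "p2 = Transposition.transpose 2 5 \<circ> Transposition.transpose 3 6"

lemma p1_vals [simp]: "p1 1 = 4" "p1 2 = 5" "p1 3 = 3" "p1 4 = 1" "p1 5 = 2" "p1 6 = 6"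
  by (simp_all add: p1_def Transposition.transpose_def)

lemma p2_vals [simp]: "p2 1 = 1" "p2 2 = 5" "p2 3 = 6" "p2 4 = 4" "p2 5 = 2" "p2 6 = 3"
  by (simp_all add: p2_def Transposition.transpose_def)

lemma p1_perm: "p1 permutes UNIV" unfolding p1_def by (intro permutes_compose permutes_swap_id) auto
lemma p2_perm: "p2 permutes UNIV" unfolding p2_def by (intro permutes_compose permutes_swap_id) auto

lemma sign_p1: "sign p1 = 1"
  unfolding p1_def by (simp add: sign_compose permutation_swap_id sign_swap_id)
lemma sign_p2: "sign p2 = 1"
  unfolding p2_def by (simp add: sign_compose permutation_swap_id sign_swap_id)

lemma pmat_carrier: "p permutes UNIV \<Longrightarrow> sign p = 1 \<Longrightarrow> pmat p \<in> carrier SO6"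
  by (simp add: rotation_matrix_def orthogonal_matrix pmat_orth det_pmat)

lemma SO6_conj: "g \<in> carrier SO6 \<Longrightarrow> g \<otimes>\<^bsub>SO6\<^esub> h \<otimes>\<^bsub>SO6\<^esub> inv\<^bsub>SO6\<^esub> g = g ** h ** transpose g"
  by (simp add: SO6_inv)

lemma conj_p1: "pmat p1 ** dmat [a,b,c,d,e,f] ** transpose (pmat p1) = dmat [d,e,c,a,b,f]"
  unfolding dmat_def pmat_conj[OF p1_perm] diag6_eq apply (subst vec_eq_iff) apply (subst forall_6) by simp
lemma conj_p2: "pmat p2 ** dmat [a,b,c,d,e,f] ** transpose (pmat p2) = dmat [a,e,f,d,b,c]"
  unfolding dmat_def pmat_conj[OF p2_perm] diag6_eq apply (subst vec_eq_iff) apply (subst forall_6) by simp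

definition L1 :: "real list list" where
  "L1 = [[1,1,1,1,1,1], [-1,-1,-1,-1,-1,-1], [-1,-1,1,1,1,1], [-1,1,-1,1,1,1],
                    [1,-1,-1,1,1,1], [-1,1,1,-1,-1,-1], [1,-1,1,-1,-1,-1], [1,1,-1,-1,-1,-1]]"
definition L2 :: "real list list" where
  "L2 = [[1,1,1,1,1,1], [-1,-1,-1,-1,-1,-1], [-1,-1,1,1,1,1], [1,1,-1,-1,1,1],
                    [1,1,1,1,-1,-1], [-1,-1,-1,-1,1,1], [-1,-1,1,1,-1,-1], [1,1,-1,-1,-1,-1]]"

definition X :: "nat \<Rightarrow> real^6^6" where "X i = dmat (L1 ! i)"
definition Y :: "nat \<Rightarrow> real^6^6" where "Y i = dmat (L2 ! i)"

lemma lt8: "{..<8::nat} = {0,1,2,3,4,5,6,7}" by auto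

lemma Gamma1_X: "Gamma1 = X ` {..<8}"
  unfolding lt8 by (simp add: X_def L1_def Gamma1_def)
lemma Gamma2_Y: "Gamma2 = Y ` {..<8}"
  unfolding lt8 by (simp add: Y_def L2_def Gamma2_def)

lemma inj_X: "inj_on X {..<8}"
  unfolding lt8 by (simp add: X_def L1_def dmat6_eq)
lemma inj_Y: "inj_on Y {..<8}"
  unfolding lt8 by (simp add: Y_def L2_def dmat6_eq)




lemma X_carrier: "i < 8 \<Longrightarrow> X i \<in> carrier SO6"
  unfolding lt8[symmetric, THEN eqset_imp_iff, of i, simplified, symmetric]
  by (auto simp: X_def L1_def intro!: rot_dmat)

lemma XY_conj: "i < 8 \<Longrightarrow> \<exists>g\<in>carrier SO6. Y i = g \<otimes>\<^bsub>SO6\<^esub> X i \<otimes>\<^bsub>SO6\<^esub> inv\<^bsub>SO6\<^esub> g"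
proof -
  assume "i < 8"
  then have "i \<in> {0,1,2,3,4,5,6,7}" using lt8 by blast
  have c1: "pmat p1 \<in> carrier SO6" by (rule pmat_carrier[OF p1_perm sign_p1])
  have c2: "pmat p2 \<in> carrier SO6" by (rule pmat_carrier[OF p2_perm sign_p2])
  have c0: "mat 1 \<in> carrier SO6" by (simp add: rotation_matrix_def orthogonal_matrix_id)
  have id: "Y i = mat 1 ** X i ** transpose (mat 1)" if "i \<in> {0,1,2,7}"
    using that by (auto simp: X_def Y_def L1_def L2_def)
  have q1: "Y i = pmat p1 ** X i ** transpose (pmat p1)" if "i \<in> {3,6}"
    using that by (auto simp: X_def Y_def L1_def L2_def conj_p1)
  have q2: "Y i = pmat p2 ** X i ** transpose (pmat p2)" if "i \<in> {4,5}"
    using that by (auto simp: X_def Y_def L1_def L2_def conj_p2)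
  show ?thesis
    using \<open>i \<in> _\<close> id q1 q2 c0 c1 c2 SO6_conj by (metis insert_iff empty_iff)
qed

lemma almost: "almost_conjugate SO6 Gamma1 Gamma2"
  unfolding almost_conjugate_def
proof
  fix b assume b: "b \<in> carrier SO6"
  let ?C = "conj_class SO6 b"
  have eq: "{i\<in>{..<8}. X i \<in> ?C} = {i\<in>{..<8}. Y i \<in> ?C}"
  proof (rule Collect_cong)
    fix i show "(i \<in> {..<8} \<and> X i \<in> ?C) = (i \<in> {..<8} \<and> Y i \<in> ?C)"
    proof (cases "i < 8")
      case True
      then obtain g where g: "g \<in> carrier SO6" "Y i = g \<otimes>\<^bsub>SO6\<^esub> X i \<otimes>\<^bsub>SO6\<^esub> inv\<^bsub>SO6\<^esub> g"
        using XY_conj by blast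
      show ?thesis using group.conj_class_shift[OF SO6_group X_carrier[OF True] g(1) b] g(2) True
        by simp
    qed simp
  qed
  have "card (?C \<inter> Gamma1) = card (X ` {i\<in>{..<8}. X i \<in> ?C})"
    unfolding Gamma1_X by (rule arg_cong[where f=card]) auto
  also have "\<dots> = card {i\<in>{..<8}. X i \<in> ?C}"
    by (rule card_image) (rule inj_on_subset[OF inj_X], auto)
  also have "\<dots> = card {i\<in>{..<8}. Y i \<in> ?C}" by (simp only: eq)
  also have "\<dots> = card (Y ` {i\<in>{..<8}. Y i \<in> ?C})"
    by (rule card_image[symmetric]) (rule inj_on_subset[OF inj_Y], auto)
  also have "\<dots> = card (?C \<inter> Gamma2)"
    unfolding Gamma2_Y by (rule arg_cong[where f=card]) auto
  finally show "card (?C \<inter> Gamma1) = card (?C \<inter> Gamma2)" .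
qed




lemma transpose_dmat [simp]: "transpose (dmat xs) = dmat xs"
  by (simp add: dmat_def)

lemma sub1: "subgroup Gamma1 SO6"
proof (rule group.subgroupI[OF SO6_group])
  show "Gamma1 \<subseteq> carrier SO6" using X_carrier unfolding Gamma1_X by auto
  show "Gamma1 \<noteq> {}" unfolding Gamma1_def by simp
  fix a assume "a \<in> Gamma1"
  then show "inv\<^bsub>SO6\<^esub> a \<in> Gamma1"
    using X_carrier unfolding Gamma1_X by (auto simp: SO6_inv X_def)
next
  fix a b assume "a \<in> Gamma1" "b \<in> Gamma1"
  then show "a \<otimes>\<^bsub>SO6\<^esub> b \<in> Gamma1"
    unfolding Gamma1_def by (auto simp: dmat_mult)
qed
lemma sub2: "subgroup Gamma2 SO6"
proof (rule group.subgroupI[OF SO6_group])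
  have "Y i \<in> carrier SO6" if "i < 8" for i
  proof -
    have G: "group SO6" by (rule SO6_group)
    from XY_conj[OF that] obtain g where g: "g \<in> carrier SO6" "Y i = g \<otimes>\<^bsub>SO6\<^esub> X i \<otimes>\<^bsub>SO6\<^esub> inv\<^bsub>SO6\<^esub> g"
      by blast
    show ?thesis unfolding g(2)
      by (intro monoid.m_closed[OF group.is_monoid[OF G]] group.inv_closed[OF G] g(1) X_carrier[OF that])
  qed
  then show "Gamma2 \<subseteq> carrier SO6" unfolding Gamma2_Y by auto
  then have c: "\<And>a. a \<in> Gamma2 \<Longrightarrow> a \<in> carrier SO6" by auto
  show "Gamma2 \<noteq> {}" unfolding Gamma2_def by simp
  fix a assume "a \<in> Gamma2"
  then show "inv\<^bsub>SO6\<^esub> a \<in> Gamma2"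
    using c[OF \<open>a \<in> Gamma2\<close>] unfolding Gamma2_Y by (auto simp: SO6_inv Y_def)
next
  fix a b assume "a \<in> Gamma2" "b \<in> Gamma2"
  then show "a \<otimes>\<^bsub>SO6\<^esub> b \<in> Gamma2"
    unfolding Gamma2_def by (auto simp: dmat_mult)
qed
lemma matrix_add_rdistrib': "((A::real^6^6) + B) ** C = A ** C + B ** C"
  by (simp add: matrix_matrix_mult_def vec_eq_iff distrib_right sum.distrib)

lemma T1: "{x\<in>Gamma1. trace x = 2} = {dmat [-1,-1,1,1,1,1], dmat [-1,1,-1,1,1,1], dmat [1,-1,-1,1,1,1]}"
  unfolding Gamma1_def by (auto simp: trace_dmat)
lemma T2: "{x\<in>Gamma2. trace x = 2} = {dmat [-1,-1,1,1,1,1], dmat [1,1,-1,-1,1,1], dmat [1,1,1,1,-1,-1]}"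
  unfolding Gamma2_def by (auto simp: trace_dmat)
lemma notconj: "\<not> conjugate_subgroups SO6 Gamma1 Gamma2"
proof
  assume "conjugate_subgroups SO6 Gamma1 Gamma2"
  then obtain g where g: "g \<in> carrier SO6" and im: "(\<lambda>h. g \<otimes>\<^bsub>SO6\<^esub> h \<otimes>\<^bsub>SO6\<^esub> inv\<^bsub>SO6\<^esub> g) ` Gamma1 = Gamma2"
    unfolding conjugate_subgroups_def by blast
  define f where "f h = g ** h ** transpose g" for h
  have ig: "inv\<^bsub>SO6\<^esub> g = transpose g" by (rule SO6_inv[OF g])
  have im2: "f ` Gamma1 = Gamma2" using im by (simp add: f_def ig)
  have gT: "transpose g ** g = mat 1" using g by (simp add: rotation_matrix_def orthogonal_matrix)
  have tr: "trace (f h) = trace h" for h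
  proof -
    have "trace (f h) = trace (transpose g ** (g ** h))" unfolding f_def by (rule trace_mul_sym)
    also have "\<dots> = trace ((transpose g ** g) ** h)" by (simp only: matrix_mul_assoc)
    also have "\<dots> = trace h" by (simp only: gT matrix_mul_lid)
    finally show ?thesis .
  qed
  have bk: "transpose g ** f h ** g = h" for h
  proof -
    have "transpose g ** f h ** g = (transpose g ** g) ** h ** (transpose g ** g)"
      unfolding f_def by (simp only: matrix_mul_assoc)
    then show ?thesis by (simp only: gT matrix_mul_lid matrix_mul_rid)
  qed
  have inj: "inj_on f S" for S
  proof (rule inj_onI)
    fix x y assume "f x = f y"
    have "x = transpose g ** f x ** g" by (rule bk[symmetric])
    also have "\<dots> = transpose g ** f y ** g" by (simp only: \<open>f x = f y\<close>)
    also have "\<dots> = y" by (rule bk)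
    finally show "x = y" .
  qed
  have fT: "f ` {x\<in>Gamma1. trace x = 2} = {x\<in>Gamma2. trace x = 2}"
    unfolding im2[symmetric] by (auto simp: tr image_iff)
  let ?A = "{dmat [-1,-1,1,1,1,1], dmat [-1,1,-1,1,1,1], dmat [1,-1,-1,1,1,1]}"
  have "sum id {x\<in>Gamma2. trace x = 2} = sum f {x\<in>Gamma1. trace x = 2}"
    unfolding fT[symmetric] by (simp add: sum.reindex[OF inj])
  also have "\<dots> = f (dmat [-1,-1,1,1,1,1]) + f (dmat [-1,1,-1,1,1,1]) + f (dmat [1,-1,-1,1,1,1])"
    unfolding T1 by (simp add: dmat6_eq add.assoc)
  also have "\<dots> = g ** dmat [-1,-1,-1,3,3,3] ** transpose g"
  proof -
    have "dmat [-1,-1,-1,3,3,3] = dmat [-1,-1,1,1,1,1] + dmat [-1,1,-1,1,1,1] + dmat [1,-1,-1,1,1,1]"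
      by (simp add: dmat_add)
    then show ?thesis by (simp add: f_def matrix_add_ldistrib matrix_add_rdistrib')
  qed
  finally have "g ** dmat [-1,-1,-1,3,3,3] ** transpose g = mat 1"
    unfolding T2 by (simp add: dmat6_eq dmat_add mat1_dmat)
  then have "transpose g ** (g ** dmat [-1,-1,-1,3,3,3] ** transpose g) ** g = mat 1"
    by (simp add: gT)
  then have "dmat [-1,-1,-1,3,3,3] = mat 1"
    using bk[of "dmat [-1,-1,-1,3,3,3]"] by (simp add: f_def)
  then show False by (simp add: mat1_dmat dmat6_eq)
qed
theorem mainTheorem3:
  shows "subgroup Gamma1 SO6 \<and> subgroup Gamma2 SO6 \<and>
         finite Gamma1 \<and> finite Gamma2 \<and>
         almost_conjugate SO6 Gamma1 Gamma2 \<and> \<not> conjugate_subgroups SO6 Gamma1 Gamma2"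
  using sub1 sub2 almost notconj by (simp add: Gamma1_def Gamma2_def)

end
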